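(* Let $G$ be the communication graph of a system admitting synchronization schedules. The isolation-resilience of the synchronized communication system on $G$ is the same whichever synchronization schedule on $G$ is used.
   Context: Model. A system consists of pairwise disjoint unit circles $C_1,\dots,C_n$ in the plane (trajectories) and a communication range $r>0$. Its communication graph $G$ has vertex set $\{C_1,\dots,C_n\}$, $C_i,C_j$ adjacent iff the distance between their centres is at most $2+r$; $G$ is assumed connected. Positions on a circle are angles (mod $2\pi$). For an edge $(i,j)$, the link position $\phi_{ij}$ is the angle of the point of $C_i$ closest to $C_j$. A schedule $F=(f,g)$ assigns each circle a starting angle $f(C_i)\in[0,2\pi)$ and direction $g(C_i)\in\{1,-1\}$; a robot following it on $C_i$ is at $f(C_i)+g(C_i)2\pi t$ at time $t$. $F$ is a synchronization schedule if $g(C_i)=-g(C_j)$ for adjacent circles and robots following $F$ on adjacent $C_i,C_j$ are at $\phi_{ij},\phi_{ji}$ at exactly the same times. A synchronized communication system (SCS) on $G$ consists of $n$ robots, initially one per circle, following a synchronization schedule, with the switching rule: when a robot on $C_i$ reaches $\phi_{ij}$ and $C_j$ is empty, it instantly passes to $C_j$ and follows the schedule of $C_j$; if $C_j$ has a robot, they meet and each stays on its circle. A partial SCS arises by letting some robots leave (possibly at different times); remaining robots never leave. A surviving robot $u$ starves if every time $u$ arrives at a link position $\phi_{ij}$ of its current circle $C_i$, the circle $C_j$ is empty; the system is in starvation state if all surviving robots starve. The isolation-resilience of an SCS is the largest $k$ such that, whichever $k$ robots leave, the system does not fall into starvation state. *)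

theory Defs
  imports "HOL-Analysis.Analysis"
begin

text \<open>A system: circles C_0..C_{n-1} with centres c i (unit radius), range r.
  Circles are indexed by the natural numbers below n.\<close>

definition adj :: "nat \<Rightarrow> (nat \<Rightarrow> complex) \<Rightarrow> real \<Rightarrow> nat \<Rightarrow> nat \<Rightarrow> bool" where
  "adj n c r i j \<longleftrightarrow> i < n \<and> j < n \<and> i \<noteq> j \<and> dist (c i) (c j) \<le> 2 + r"

definition valid_system :: "nat \<Rightarrow> (nat \<Rightarrow> complex) \<Rightarrow> real \<Rightarrow> bool" where
  "valid_system n c r \<longleftrightarrow> n \<ge> 1 \<and> r > 0
     \<and> (\<forall>i<n. \<forall>j<n. i \<noteq> j \<longrightarrow> dist (c i) (c j) > 2)
     \<and> (\<forall>i<n. \<forall>j<n. (i, j) \<in> {(a, b). adj n c r a b}\<^sup>*)"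

text \<open>Link position: angle of the point of C_i closest to C_j.\<close>
definition link_pos :: "(nat \<Rightarrow> complex) \<Rightarrow> nat \<Rightarrow> nat \<Rightarrow> real" where
  "link_pos c i j = Arg (c j - c i)"

definition on_angle :: "real \<Rightarrow> real \<Rightarrow> bool" where
  "on_angle x \<theta> \<longleftrightarrow> (\<exists>m::int. x = \<theta> + 2 * pi * of_int m)"

text \<open>Position at time t of a robot following schedule (f, g) on C_i.\<close>
definition pos :: "(nat \<Rightarrow> real) \<Rightarrow> (nat \<Rightarrow> int) \<Rightarrow> nat \<Rightarrow> real \<Rightarrow> real" where
  "pos f g i t = f i + of_int (g i) * 2 * pi * t"

definition sync_schedule ::
  "nat \<Rightarrow> (nat \<Rightarrow> complex) \<Rightarrow> real \<Rightarrow> (nat \<Rightarrow> real) \<Rightarrow> (nat \<Rightarrow> int) \<Rightarrow> bool" where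
  "sync_schedule n c r f g \<longleftrightarrow>
     (\<forall>i<n. 0 \<le> f i \<and> f i < 2 * pi \<and> (g i = 1 \<or> g i = -1))
     \<and> (\<forall>i j. adj n c r i j \<longrightarrow> g i = - g j
            \<and> (\<forall>t. on_angle (pos f g i t) (link_pos c i j)
                   \<longleftrightarrow> on_angle (pos f g j t) (link_pos c j i)))"

definition active ::
  "nat \<Rightarrow> (nat \<Rightarrow> complex) \<Rightarrow> real \<Rightarrow> (nat \<Rightarrow> real) \<Rightarrow> (nat \<Rightarrow> int) \<Rightarrow> real \<Rightarrow> nat \<Rightarrow> nat \<Rightarrow> bool" where
  "active n c r f g t i j \<longleftrightarrow> adj n c r i j \<and> on_angle (pos f g i t) (link_pos c i j)"

text \<open>Switching rule at time t applied to the set S of occupied circles (state just before t):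
  a robot on C_j at phi_ji leaves to C_i if C_i is empty; an empty C_j receives the robot of
  C_i if that robot is at phi_ij.\<close>
definition switch ::
  "nat \<Rightarrow> (nat \<Rightarrow> complex) \<Rightarrow> real \<Rightarrow> (nat \<Rightarrow> real) \<Rightarrow> (nat \<Rightarrow> int) \<Rightarrow> real \<Rightarrow> nat set \<Rightarrow> nat set" where
  "switch n c r f g t S =
     {j. j \<in> S \<and> \<not> (\<exists>i. active n c r f g t j i \<and> i \<notin> S)}
     \<union> {j. j \<notin> S \<and> (\<exists>i. active n c r f g t i j \<and> i \<in> S)}"

definition left_value :: "(real \<Rightarrow> nat set) \<Rightarrow> real \<Rightarrow> nat set \<Rightarrow> bool" where
  "left_value occ t S \<longleftrightarrow> (\<exists>e>0. \<forall>s. t - e < s \<and> s < t \<longrightarrow> occ s = S)"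

text \<open>A (partial) SCS run: occ t is the set of occupied circles at time t (after the events at t).
  Initially every circle holds a robot; at every time the state is obtained from the state just
  before by the switching rule, after which some robots may leave (subset).\<close>
definition partial_run ::
  "nat \<Rightarrow> (nat \<Rightarrow> complex) \<Rightarrow> real \<Rightarrow> (nat \<Rightarrow> real) \<Rightarrow> (nat \<Rightarrow> int) \<Rightarrow> (real \<Rightarrow> nat set) \<Rightarrow> bool" where
  "partial_run n c r f g occ \<longleftrightarrow>
     (\<forall>t\<ge>0. occ t \<subseteq> {..<n})
     \<and> occ 0 \<subseteq> switch n c r f g 0 {..<n}
     \<and> (\<forall>t>0. \<exists>S. left_value occ t S \<and> occ t \<subseteq> switch n c r f g t S)"

text \<open>Exactly k robots leave (in total) during the run.\<close>
definition leaves :: "nat \<Rightarrow> (real \<Rightarrow> nat set) \<Rightarrow> nat \<Rightarrow> bool" where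
  "leaves n occ k \<longleftrightarrow> (\<exists>T\<ge>0. \<forall>t\<ge>T. card (occ t) = n - k)"

text \<open>The run falls into starvation state: from some time on, whenever a robot on C_i arrives
  at phi_ij, circle C_j is empty (no meeting ever happens again).\<close>
definition starvation ::
  "nat \<Rightarrow> (nat \<Rightarrow> complex) \<Rightarrow> real \<Rightarrow> (nat \<Rightarrow> real) \<Rightarrow> (nat \<Rightarrow> int) \<Rightarrow> (real \<Rightarrow> nat set) \<Rightarrow> bool" where
  "starvation n c r f g occ \<longleftrightarrow>
     (\<exists>T\<ge>0. \<forall>t\<ge>T. \<forall>S. left_value occ t S \<longrightarrow>
        \<not> (\<exists>i j. active n c r f g t i j \<and> i \<in> S \<and> j \<in> S))"

definition resilient ::
  "nat \<Rightarrow> (nat \<Rightarrow> complex) \<Rightarrow> real \<Rightarrow> (nat \<Rightarrow> real) \<Rightarrow> (nat \<Rightarrow> int) \<Rightarrow> nat \<Rightarrow> bool" where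
  "resilient n c r f g k \<longleftrightarrow> k \<le> n \<and>
     (\<forall>occ. partial_run n c r f g occ \<and> leaves n occ k \<longrightarrow> \<not> starvation n c r f g occ)"

definition isolation_resilience ::
  "nat \<Rightarrow> (nat \<Rightarrow> complex) \<Rightarrow> real \<Rightarrow> (nat \<Rightarrow> real) \<Rightarrow> (nat \<Rightarrow> int) \<Rightarrow> nat" where
  "isolation_resilience n c r f g = (GREATEST k. resilient n c r f g k)"

end

theory Submission
  imports Defs
begin

lemma on_angle_shift: "on_angle (x + 2*pi* of_int m) \<theta> \<longleftrightarrow> on_angle x \<theta>"
proof
  assume "on_angle (x + 2*pi* of_int m) \<theta>"
  then obtain k::int where "x + 2*pi* of_int m = \<theta> + 2*pi* of_int k" by (auto simp: on_angle_def)
  then have "x = \<theta> + 2*pi* of_int (k - m)" by (simp add: algebra_simps del: of_int_diff) (simp add: algebra_simps)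
  then show "on_angle x \<theta>" unfolding on_angle_def by blast
next
  assume "on_angle x \<theta>"
  then obtain k::int where "x = \<theta> + 2*pi* of_int k" by (auto simp: on_angle_def)
  then have "x + 2*pi* of_int m = \<theta> + 2*pi* of_int (k + m)" by (simp add: algebra_simps)
  then show "on_angle (x + 2*pi* of_int m) \<theta>" unfolding on_angle_def by blast
qed

lemma active_periodic: "active n c r f g (t + of_int m) i j \<longleftrightarrow> active n c r f g t i j"
proof -
  have "pos f g i (t + of_int m) = pos f g i t + 2*pi* of_int (g i * m)"
    by (simp add: pos_def algebra_simps)
  then show ?thesis by (simp only: active_def on_angle_shift)
qed

lemma adj_sym: "adj n c r i j \<Longrightarrow> adj n c r j i"
  by (auto simp: adj_def dist_commute)

lemma active_sym: "sync_schedule n c r f g \<Longrightarrow> active n c r f g t i j \<Longrightarrow> active n c r f g t j i"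
  unfolding active_def sync_schedule_def using adj_sym by blast

lemma switch_sub: "S \<subseteq> {..<n} \<Longrightarrow> switch n c r f g t S \<subseteq> {..<n}"
  by (auto simp: switch_def active_def adj_def)

lemma switch_full: "switch n c r f g t {..<n} = {..<n}"
  by (auto simp: switch_def active_def adj_def)

lemma switch_noactive: "(\<forall>i j. \<not> active n c r f g t i j) \<Longrightarrow> switch n c r f g t S = S"
  by (auto simp: switch_def)

lemma frac_add: "0 \<le> h \<Longrightarrow> frac x + h < 1 \<Longrightarrow> frac (x + h) = frac x + (h::real)"
proof -
  assume a: "0 \<le> h" "frac x + h < 1"
  have "floor (x + h) = floor x"
  proof (rule floor_unique)
    have "real_of_int (floor x) \<le> x" by simp
    then show "real_of_int (floor x) \<le> x + h" using a by linarith
    show "x + h < real_of_int (floor x) + 1" using a by (simp add: frac_def)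
  qed
  then show ?thesis by (simp add: frac_def)
qed


lemma int_small: "\<bar>2*pi* of_int (m::int)\<bar> < 2*pi \<Longrightarrow> m = 0"
proof -
  assume "\<bar>2*pi* of_int m\<bar> < 2*pi"
  then have "2*pi*\<bar>of_int m\<bar> < 2*pi*1" by (simp add: abs_mult)
  then have "\<bar>real_of_int m\<bar> < 1" using pi_gt_zero by (simp only: mult_less_cancel_left_pos)
  then show "m = 0" by linarith
qed

lemma active_match:
  assumes vs: "valid_system n c r" and sy: "sync_schedule n c r f g"
    and a1: "active n c r f g t j i" and a2: "active n c r f g t j i'"
  shows "i = i'"
proof (rule ccontr)
  assume ne: "i \<noteq> i'"
  from a1 obtain k1::int where adj1: "adj n c r j i" and e1: "pos f g j t = Arg (c i - c j) + 2*pi* of_int k1"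
    by (auto simp: active_def on_angle_def link_pos_def)
  from a2 obtain k2::int where adj2: "adj n c r j i'" and e2: "pos f g j t = Arg (c i' - c j) + 2*pi* of_int k2"
    by (auto simp: active_def on_angle_def link_pos_def)
  have "Arg (c i - c j) - Arg (c i' - c j) = 2*pi* of_int (k2 - k1)" using e1 e2 by (simp add: algebra_simps)
  moreover have "\<bar>Arg (c i - c j) - Arg (c i' - c j)\<bar> < 2*pi"
    using mpi_less_Arg[of "c i - c j"] Arg_le_pi[of "c i - c j"] mpi_less_Arg[of "c i' - c j"] Arg_le_pi[of "c i' - c j"]
    by linarith
  ultimately have "k2 - k1 = 0" using int_small by metis
  then have argeq: "Arg (c i - c j) = Arg (c i' - c j)" using e1 e2 by simp
  have ji: "j \<noteq> i" "j \<noteq> i'" "i < n" "i' < n" "j < n" using adj1 adj2 by (auto simp: adj_def)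
  have d1: "dist (c i) (c j) > 2" "dist (c i') (c j) > 2" using vs ji by (auto simp: valid_system_def)
  have d2: "dist (c j) (c i) \<le> 2 + r" "dist (c j) (c i') \<le> 2 + r" using adj1 adj2 by (auto simp: adj_def)
  have nz: "c i - c j \<noteq> 0" "c i' - c j \<noteq> 0" using d1 by (auto simp: dist_norm)
  obtain x where x: "0 < x" "c i - c j = of_real x * (c i' - c j)" using Arg_eq_iff[OF nz] argeq by blast
  have "c i - c i' = of_real (x - 1) * (c i' - c j)" using x(2) by (simp add: algebra_simps)
  then have "dist (c i) (c i') = \<bar>x - 1\<bar> * norm (c i' - c j)" by (simp only: dist_norm norm_mult norm_of_real)
  also have "\<dots> = \<bar>x * norm (c i' - c j) - norm (c i' - c j)\<bar>" by (metis abs_mult abs_of_nonneg left_diff_distrib mult.left_neutral norm_ge_zero)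
  also have "x * norm (c i' - c j) = norm (c i - c j)" using x by (simp add: norm_mult)
  finally have "dist (c i) (c i') = \<bar>dist (c i) (c j) - dist (c i') (c j)\<bar>" by (simp add: dist_norm)
  also have "\<dots> < r" using d1 d2 by (simp add: dist_commute)
  finally have "adj n c r i i'" using ne ji vs by (auto simp: adj_def valid_system_def)
  then have "g i = - g i'" using sy by (auto simp: sync_schedule_def)
  moreover have "g j = - g i" using sy adj1 unfolding sync_schedule_def by blast
  moreover have "g j = - g i'" using sy adj2 unfolding sync_schedule_def by blast
  moreover have "g i = 1 \<or> g i = -1" using sy ji by (auto simp: sync_schedule_def)
  ultimately show False by auto
qed

lemma switch_card:
  assumes vs: "valid_system n c r" and sy: "sync_schedule n c r f g"
    and S: "S \<subseteq> {..<n}"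
    and ind: "\<forall>i j. active n c r f g t i j \<longrightarrow> \<not> (i \<in> S \<and> j \<in> S)"
  shows "card S \<le> card (switch n c r f g t S)"
proof -
  define h where "h j = (if \<exists>i. active n c r f g t j i \<and> i \<notin> S then (THE i. active n c r f g t j i) else j)" for j
  have hp: "h j \<in> switch n c r f g t S \<and> (h j \<notin> S \<longrightarrow> active n c r f g t j (h j)) \<and> (h j \<in> S \<longrightarrow> h j = j)" if "j \<in> S" for j
  proof (cases "\<exists>i. active n c r f g t j i \<and> i \<notin> S")
    case True
    then obtain i where i: "active n c r f g t j i" "i \<notin> S" by blast
    have "(THE i. active n c r f g t j i) = i"
    proof (rule the_equality)
      show "active n c r f g t j i" by (rule i(1))
      fix x assume "active n c r f g t j x"
      then show "x = i" by (rule active_match[OF vs sy _ i(1)])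
    qed
    then have hj: "h j = i" using True unfolding h_def by (simp only: if_True)
    have "i \<notin> S \<and> (\<exists>i'. active n c r f g t i' i \<and> i' \<in> S)" using i that by blast
    then have "i \<in> switch n c r f g t S" unfolding switch_def by (rule UnI2[OF CollectI])
    then show ?thesis using hj i by simp
  next
    case False
    then have "h j = j" unfolding h_def by (simp only: if_False)
    moreover have "j \<in> S \<and> \<not> (\<exists>i. active n c r f g t j i \<and> i \<notin> S)" using False that by blast
    then have "j \<in> switch n c r f g t S" unfolding switch_def by (rule UnI1[OF CollectI])
    ultimately show ?thesis using that by simp
  qed
  have "inj_on h S"
  proof (rule inj_onI)
    fix a b assume ab: "a \<in> S" "b \<in> S" "h a = h b"
    note ha = hp[OF ab(1)] and hb = hp[OF ab(2)]
    show "a = b"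
    proof (cases "h a \<in> S")
      case True
      have hbS: "h b \<in> S" using True ab(3) by metis
      have "h a = a" using True ha by blast
      moreover have "h b = b" using hbS hb by blast
      ultimately show ?thesis using ab(3) by metis
    next
      case False
      have hbS: "h b \<notin> S" using False ab(3) by metis
      have 1: "active n c r f g t a (h a)" using False ha by blast
      have "active n c r f g t b (h b)" using hbS hb by blast
      then have 2: "active n c r f g t b (h a)" using ab(3) by metis
      show ?thesis by (rule active_match[OF vs sy active_sym[OF sy 1] active_sym[OF sy 2]])
    qed
  qed
  moreover have "h ` S \<subseteq> switch n c r f g t S" using hp by blast
  moreover have "finite (switch n c r f g t S)" using switch_sub[OF S] by (rule finite_subset) simp
  ultimately show ?thesis by (rule card_inj_on_le)
qed

definition aval :: "(nat \<Rightarrow> real) \<Rightarrow> (nat \<Rightarrow> int) \<Rightarrow> (nat \<Rightarrow> complex) \<Rightarrow> nat \<Rightarrow> nat \<Rightarrow> real" where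
  "aval f g c i j = of_int (g i) * (link_pos c i j - f i) / (2*pi)"

lemma active_event:
  assumes sy: "sync_schedule n c r f g" and a: "active n c r f g t i j"
  shows "aval f g c i j - t \<in> \<int>"
proof -
  from a have "i < n" by (auto simp: active_def adj_def)
  then have g: "g i = 1 \<or> g i = -1" using sy by (auto simp: sync_schedule_def)
  from a obtain m::int where m: "f i + of_int (g i) * 2 * pi * t = link_pos c i j + 2*pi* of_int m"
    by (auto simp: active_def on_angle_def pos_def)
  from g show ?thesis
  proof
    assume g1: "g i = 1"
    then have "t = (link_pos c i j - f i) / (2*pi) + of_int m" using m by (simp add: field_simps)
    then have "aval f g c i j - t = of_int (- m)" using g1 by (simp add: aval_def)
    then show ?thesis by (metis Ints_of_int)
  next
    assume g1: "g i = -1"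
    then have "t = (f i - link_pos c i j) / (2*pi) - of_int m" using m by (simp add: field_simps)
    then have "aval f g c i j - t = of_int m" using g1 by (simp add: aval_def field_simps)
    then show ?thesis by (metis Ints_of_int)
  qed
qed

definition Nx :: "real set \<Rightarrow> real \<Rightarrow> real" where
  "Nx A t = t + Min ((\<lambda>a. frac (a - t)) ` A)"

lemma N_ge: "finite A \<Longrightarrow> A \<noteq> {} \<Longrightarrow> t \<le> Nx A t"
  by (simp add: Nx_def)

lemma N_event: "finite A \<Longrightarrow> a \<in> A \<Longrightarrow> a - t \<in> \<int> \<Longrightarrow> Nx A t = t"
proof -
  assume fa: "finite A" "a \<in> A" "a - t \<in> \<int>"
  then have "Min ((\<lambda>a. frac (a - t)) ` A) \<le> frac (a - t)" by (intro Min_le) auto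
  moreover have "frac (a - t) = 0" using fa by simp
  moreover have "0 \<le> Min ((\<lambda>a. frac (a - t)) ` A)" using fa by (subst Min_ge_iff) auto
  ultimately have "Min ((\<lambda>a. frac (a - t)) ` A) = 0" by linarith
  then show ?thesis by (simp add: Nx_def)
qed

lemma N_left:
  assumes fa: "finite A" "A \<noteq> {}"
  shows "\<exists>e>0. \<forall>s. t - e < s \<and> s < t \<longrightarrow> Nx A s = Nx A t"
proof -
  define e where "e = Min ((\<lambda>a. 1 - frac (a - t)) ` A)"
  have "\<forall>x\<in>A. frac (x - t) < 1" by (simp add: frac_lt_1)
  then have e0: "e > 0" unfolding e_def using fa by simp
  have "Nx A s = Nx A t" if s: "t - e < s" "s < t" for s
  proof -
    define h where "h = t - s"
    have h: "0 < h" "h < e" using s by (auto simp: h_def)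
    have fr: "frac (a - s) = frac (a - t) + h" if "a \<in> A" for a
    proof -
      have "e \<le> 1 - frac (a - t)" unfolding e_def using fa that by (intro Min_le) auto
      then have "frac (a - t) + h < 1" using h by linarith
      then have "frac ((a - t) + h) = frac (a - t) + h" using h by (intro frac_add) auto
      moreover have "(a - t) + h = a - s" by (simp add: h_def)
      ultimately show ?thesis by simp
    qed
    have "(\<lambda>a. frac (a - s)) ` A = (\<lambda>x. x + h) ` ((\<lambda>a. frac (a - t)) ` A)"
      using fr by (auto simp: image_image intro!: image_cong)
    then have "Min ((\<lambda>a. frac (a - s)) ` A) = Min ((\<lambda>a. frac (a - t)) ` A) + h"
      using fa by (simp add: mono_Min_commute[symmetric] mono_def)
    then show ?thesis by (simp add: Nx_def h_def)
  qed
  with e0 show ?thesis by blast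
qed

definition indep :: "nat \<Rightarrow> (nat \<Rightarrow> complex) \<Rightarrow> real \<Rightarrow> (nat \<Rightarrow> real) \<Rightarrow> (nat \<Rightarrow> int) \<Rightarrow> real \<Rightarrow> nat set \<Rightarrow> bool" where
  "indep n c r f g t S \<longleftrightarrow> (\<forall>i j. active n c r f g t i j \<longrightarrow> \<not> (i \<in> S \<and> j \<in> S))"

definition Qk :: "nat \<Rightarrow> (nat \<Rightarrow> complex) \<Rightarrow> real \<Rightarrow> (nat \<Rightarrow> real) \<Rightarrow> (nat \<Rightarrow> int) \<Rightarrow> nat \<Rightarrow> bool" where
  "Qk n c r f g k \<longleftrightarrow> (\<forall>t. \<exists>S. S \<subseteq> {..<n} \<and> card S = n - k \<and> indep n c r f g t S)"

lemma left_value_unique: "left_value occ t S \<Longrightarrow> left_value occ t S' \<Longrightarrow> S = S'"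
proof -
  assume "left_value occ t S" "left_value occ t S'"
  then obtain e e' where e: "e > 0" "\<forall>s. t - e < s \<and> s < t \<longrightarrow> occ s = S"
    and e': "e' > 0" "\<forall>s. t - e' < s \<and> s < t \<longrightarrow> occ s = S'" by (auto simp: left_value_def)
  define s where "s = t - min e e' / 2"
  have "t - e < s \<and> s < t" "t - e' < s \<and> s < t" using e(1) e'(1) by (auto simp: s_def min_def)
  then show "S = S'" using e(2) e'(2) by metis
qed

lemma lemmaB:
  assumes vs: "valid_system n c r" and sy: "sync_schedule n c r f g" and Q: "Qk n c r f g k"
  shows "\<exists>occ. partial_run n c r f g occ \<and> leaves n occ k \<and> starvation n c r f g occ"
proof -
  define A where "A = insert 0 ((\<lambda>(i,j). aval f g c i j) ` {(i,j). adj n c r i j})"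
  have "{(i,j). adj n c r i j} \<subseteq> {..<n} \<times> {..<n}" by (auto simp: adj_def)
  then have "finite {(i,j). adj n c r i j}" by (rule finite_subset) simp
  then have fA: "finite A" "A \<noteq> {}" by (auto simp: A_def)
  have ev: "Nx A t = t" if "active n c r f g t i j" for t i j
  proof -
    have "aval f g c i j \<in> A" using that by (auto simp: A_def active_def)
    then show ?thesis using N_event[OF fA(1)] active_event[OF sy that] by blast
  qed
  have noact: "\<not> active n c r f g t i j" if "Nx A t \<noteq> t" for t i j using ev that by blast
  define B where "B t = (SOME S. S \<subseteq> {..<n} \<and> card S = n - k \<and> indep n c r f g t S)" for t
  have Bp: "B t \<subseteq> {..<n} \<and> card (B t) = n - k \<and> indep n c r f g t (B t)" for t
  proof -
    have "\<exists>S. S \<subseteq> {..<n} \<and> card S = n - k \<and> indep n c r f g t S" using Q unfolding Qk_def by blast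
    then show ?thesis unfolding B_def by (rule someI_ex)
  qed
  define X where "X t = (SOME X. X \<subseteq> switch n c r f g t (B t) \<and> card X = n - k)" for t
  have Xp: "X t \<subseteq> switch n c r f g t (B t) \<and> card (X t) = n - k" for t
  proof -
    have "card (B t) \<le> card (switch n c r f g t (B t))"
      using switch_card[OF vs sy] Bp[of t] unfolding indep_def by blast
    then have "n - k \<le> card (switch n c r f g t (B t))" using Bp[of t] by simp
    then obtain Y where "Y \<subseteq> switch n c r f g t (B t)" "card Y = n - k" by (rule obtain_subset_with_card_n)
    then show ?thesis unfolding X_def by (rule someI2[where Q = "\<lambda>X. X \<subseteq> switch n c r f g t (B t) \<and> card X = n - k", OF conjI]) 
  qed
  define occ where "occ t = (if Nx A t = t then X t else B (Nx A t))" for t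
  have lv: "left_value occ t (B (Nx A t))" for t
  proof -
    obtain e where e: "e > 0" "\<forall>s. t - e < s \<and> s < t \<longrightarrow> Nx A s = Nx A t" using N_left[OF fA] by blast
    have "occ s = B (Nx A t)" if "t - e < s" "s < t" for s
    proof -
      have "Nx A s = Nx A t" using e that by blast
      moreover have "t \<le> Nx A t" by (rule N_ge[OF fA])
      ultimately have "Nx A s \<noteq> s" using that by linarith
      then show ?thesis using \<open>Nx A s = Nx A t\<close> by (simp add: occ_def)
    qed
    then show ?thesis using e(1) unfolding left_value_def by blast
  qed
  have sub: "occ t \<subseteq> switch n c r f g t (B (Nx A t))" for t
  proof (cases "Nx A t = t")
    case True
    then show ?thesis using Xp[of t] by (simp add: occ_def)
  next
    case False
    then have "switch n c r f g t (B (Nx A t)) = B (Nx A t)" using noact by (intro switch_noactive) blast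
    then show ?thesis using False by (simp add: occ_def)
  qed
  have occn: "occ t \<subseteq> {..<n}" for t
    using sub[of t] switch_sub Bp by blast
  have card: "card (occ t) = n - k" for t
    using Xp[of t] Bp[of "Nx A t"] by (simp add: occ_def)
  have "partial_run n c r f g occ"
    unfolding partial_run_def using occn lv sub switch_full by blast
  moreover have "leaves n occ k" unfolding leaves_def using card by blast
  moreover have "starvation n c r f g occ"
    unfolding starvation_def
  proof (intro exI[of _ 0] conjI allI impI)
    fix t S assume "0 \<le> t" and l: "left_value occ t S"
    then have S: "S = B (Nx A t)" using left_value_unique lv by blast
    show "\<not> (\<exists>i j. active n c r f g t i j \<and> i \<in> S \<and> j \<in> S)"
    proof (cases "Nx A t = t")
      case True
      then show ?thesis using Bp[of t] S by (simp add: indep_def)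
    next
      case False
      then show ?thesis using noact by blast
    qed
  qed simp
  ultimately show ?thesis by blast
qed

lemma lemmaA:
  assumes pr: "partial_run n c r f g occ" and lk: "leaves n occ k" and st: "starvation n c r f g occ"
  shows "Qk n c r f g k"
  unfolding Qk_def
proof
  fix t0
  obtain T1 where T1: "T1 \<ge> 0" "\<forall>t\<ge>T1. card (occ t) = n - k" using lk by (auto simp: leaves_def)
  obtain T2 where T2: "T2 \<ge> 0" "\<forall>t\<ge>T2. \<forall>S. left_value occ t S \<longrightarrow>
        \<not> (\<exists>i j. active n c r f g t i j \<and> i \<in> S \<and> j \<in> S)" using st by (auto simp: starvation_def)
  define m where "m = ceiling (T1 + T2 + 1 - t0)"
  define t where "t = t0 + of_int m"
  have "real_of_int m \<ge> T1 + T2 + 1 - t0" unfolding m_def by (rule le_of_int_ceiling)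
  then have tb: "t > T1" "t > T2" using T1 T2 unfolding t_def by linarith+
  have "t > 0" using tb T1 by linarith
  then have "\<exists>S. left_value occ t S \<and> occ t \<subseteq> switch n c r f g t S"
    using pr unfolding partial_run_def by blast
  then obtain S where S: "left_value occ t S" "occ t \<subseteq> switch n c r f g t S" by blast
  then obtain e where e: "e > 0" "\<forall>s. t - e < s \<and> s < t \<longrightarrow> occ s = S" by (auto simp: left_value_def)
  define s where "s = max (t - e/2) T1"
  have s: "t - e < s" "s < t" "s \<ge> T1" "s \<ge> 0" using e(1) tb T1 by (auto simp: s_def)
  then have os: "occ s = S" using e by blast
  have "card (occ s) = n - k" using T1(2) s(3) by blast
  then have "card S = n - k" using os by simp
  moreover have "S \<subseteq> {..<n}" using pr s os unfolding partial_run_def by blast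
  moreover have "indep n c r f g t0 S"
    unfolding indep_def
  proof (intro allI impI notI)
    fix i j assume a: "active n c r f g t0 i j" and ij: "i \<in> S \<and> j \<in> S"
    have "active n c r f g t i j" using a active_periodic unfolding t_def by blast
    moreover have "\<not> (\<exists>i j. active n c r f g t i j \<and> i \<in> S \<and> j \<in> S)" using T2(2) tb(2) S(1) less_imp_le by blast
    ultimately show False using ij by blast
  qed
  ultimately show "\<exists>S. S \<subseteq> {..<n} \<and> card S = n - k \<and> indep n c r f g t0 S" by blast
qed

lemma sum_rel:
  assumes sy: "sync_schedule n c r f g" and a: "adj n c r i j"
  shows "\<exists>m::int. f i + f j = link_pos c i j + link_pos c j i + 2*pi* of_int m"
proof -
  have "i < n" using a by (auto simp: adj_def)
  then have gi: "g i = 1 \<or> g i = -1" using sy by (auto simp: sync_schedule_def)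
  have gj0: "g i = - g j" and eq: "\<forall>t. on_angle (pos f g i t) (link_pos c i j) \<longleftrightarrow> on_angle (pos f g j t) (link_pos c j i)"
    using sy a unfolding sync_schedule_def by blast+
  then have gj: "g j = - g i" by simp
  define t0 where "t0 = of_int (g i) * (link_pos c i j - f i) / (2*pi)"
  have gg: "real_of_int (g i) * real_of_int (g i) = 1" using gi by auto
  have "of_int (g i) * 2 * pi * t0 = (real_of_int (g i) * real_of_int (g i)) * (link_pos c i j - f i)"
    unfolding t0_def by (simp add: field_simps)
  then have p: "pos f g i t0 = link_pos c i j" unfolding pos_def using gg by simp
  then have "on_angle (pos f g i t0) (link_pos c i j)" unfolding on_angle_def by (intro exI[of _ 0]) simp
  then have "on_angle (pos f g j t0) (link_pos c j i)" using eq by blast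
  then obtain m::int where m: "pos f g j t0 = link_pos c j i + 2*pi* of_int m" unfolding on_angle_def by blast
  have "pos f g j t0 = f j - (pos f g i t0 - f i)" unfolding pos_def using gj by simp
  then have "f j - (link_pos c i j - f i) = link_pos c j i + 2*pi* of_int m" using m p by simp
  then show ?thesis by (intro exI[of _ m]) (simp add: algebra_simps)
qed

lemma conn:
  assumes vs: "valid_system n c r" and P0: "P 0" and step: "\<And>a b. adj n c r a b \<Longrightarrow> P a \<Longrightarrow> P b"
    and i: "i < n"
  shows "P i"
proof -
  have "(0, i) \<in> {(a, b). adj n c r a b}\<^sup>*" using vs i unfolding valid_system_def by auto
  then show ?thesis
  proof (induction rule: rtrancl_induct)
    case base then show ?case by (rule P0)
  next
    case (step y z) then show ?case using assms(3) by blast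
  qed
qed

lemma lemmaC:
  assumes vs: "valid_system n c r" and s1: "sync_schedule n c r f1 g1" and s2: "sync_schedule n c r f2 g2"
  shows "\<exists>\<tau> \<sigma>::real. (\<sigma> = 1 \<or> \<sigma> = -1) \<and> (\<forall>t i j. active n c r f2 g2 t i j \<longleftrightarrow> active n c r f1 g1 (\<tau> + \<sigma> * t) i j)"
proof -
  have n0: "0 < n" using vs by (auto simp: valid_system_def)
  have g1pm: "g1 i = 1 \<or> g1 i = -1" if "i < n" for i using s1 that by (auto simp: sync_schedule_def)
  have g2pm: "g2 i = 1 \<or> g2 i = -1" if "i < n" for i using s2 that by (auto simp: sync_schedule_def)
  have gadj1: "g1 b = - g1 a" if "adj n c r a b" for a b using s1 that adj_sym unfolding sync_schedule_def by blast
  have gadj2: "g2 b = - g2 a" if "adj n c r a b" for a b using s2 that adj_sym unfolding sync_schedule_def by blast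
  define sg where "sg = g2 0 * g1 0"
  have sgi: "g2 i * g1 i = sg" if "i < n" for i
    using conn[OF vs _ _ that, of "\<lambda>i. g2 i * g1 i = sg"] gadj1 gadj2 unfolding sg_def by fastforce
  have sgpm: "sg = 1 \<or> sg = -1" using g1pm[OF n0] g2pm[OF n0] unfolding sg_def by auto
  have g2i: "g2 i = sg * g1 i" if "i < n" for i
  proof -
    have "g2 i = g2 i * (g1 i * g1 i)" using g1pm[OF that] by auto
    also have "\<dots> = sg * g1 i" using sgi[OF that] by (simp add: mult.assoc[symmetric])
    finally show ?thesis .
  qed
  define E where "E i = real_of_int (g1 i) * (f2 i - f1 i)" for i
  have Ei: "\<exists>m::int. E i = E 0 + 2*pi* of_int m" if "i < n" for i
  proof (rule conn[OF vs _ _ that, of "\<lambda>i. \<exists>m::int. E i = E 0 + 2*pi* of_int m"])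
    show "\<exists>m::int. E 0 = E 0 + 2*pi* of_int m" by (intro exI[of _ 0]) simp
  next
    fix a b assume ab: "adj n c r a b" and "\<exists>m::int. E a = E 0 + 2*pi* of_int m"
    then obtain ma::int where ma: "E a = E 0 + 2*pi* of_int ma" by blast
    obtain m1::int where m1: "f1 a + f1 b = link_pos c a b + link_pos c b a + 2*pi* of_int m1"
      using sum_rel[OF s1 ab] by blast
    obtain m2::int where m2: "f2 a + f2 b = link_pos c a b + link_pos c b a + 2*pi* of_int m2"
      using sum_rel[OF s2 ab] by blast
    have D: "(f2 b - f1 b) = 2*pi* of_int (m2 - m1) - (f2 a - f1 a)" using m1 m2 by (simp add: algebra_simps)
    have "E b = - real_of_int (g1 a) * (f2 b - f1 b)" unfolding E_def using gadj1[OF ab] by simp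
    also have "\<dots> = E a - 2*pi* of_int (g1 a * (m2 - m1))" unfolding D E_def by (simp add: algebra_simps)
    also have "\<dots> = E 0 + 2*pi* of_int (ma - g1 a * (m2 - m1))" using ma by (simp add: algebra_simps)
    finally show "\<exists>m::int. E b = E 0 + 2*pi* of_int m" by blast
  qed
  define \<tau> where "\<tau> = E 0 / (2*pi)"
  define \<sigma> where "\<sigma> = real_of_int sg"
  have main: "active n c r f2 g2 t i j \<longleftrightarrow> active n c r f1 g1 (\<tau> + \<sigma> * t) i j" for t i j
  proof (cases "adj n c r i j")
    case False then show ?thesis by (simp add: active_def)
  next
    case True
    then have i: "i < n" by (auto simp: adj_def)
    obtain m::int where m: "E i = E 0 + 2*pi* of_int m" using Ei[OF i] by blast
    have gg: "real_of_int (g1 i) * real_of_int (g1 i) = 1" using g1pm[OF i] by auto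
    have "f2 i - f1 i = real_of_int (g1 i) * E i" unfolding E_def using gg by (simp add: mult.assoc[symmetric])
    then have f2: "f2 i = f1 i + real_of_int (g1 i) * E 0 + 2*pi* of_int (g1 i * m)" using m by (simp add: algebra_simps)
    have "pos f2 g2 i t = pos f1 g1 i (\<tau> + \<sigma> * t) + 2*pi* of_int (g1 i * m)"
      unfolding pos_def f2 g2i[OF i] \<tau>_def \<sigma>_def by (simp add: field_simps)
    then show ?thesis by (simp only: active_def on_angle_shift)
  qed
  have "\<sigma> = 1 \<or> \<sigma> = -1" using sgpm unfolding \<sigma>_def by auto
  then show ?thesis using main by blast
qed

lemma res_char:
  assumes vs: "valid_system n c r" and sy: "sync_schedule n c r f g"
  shows "resilient n c r f g k \<longleftrightarrow> k \<le> n \<and> \<not> Qk n c r f g k"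
proof
  assume R: "resilient n c r f g k"
  show "k \<le> n \<and> \<not> Qk n c r f g k"
  proof
    show "k \<le> n" using R by (simp add: resilient_def)
    show "\<not> Qk n c r f g k"
    proof
      assume "Qk n c r f g k"
      then obtain occ where "partial_run n c r f g occ \<and> leaves n occ k \<and> starvation n c r f g occ"
        using lemmaB[OF vs sy] by blast
      then show False using R by (auto simp: resilient_def)
    qed
  qed
next
  assume "k \<le> n \<and> \<not> Qk n c r f g k"
  then show "resilient n c r f g k" using lemmaA by (auto simp: resilient_def)
qed

lemma Q_eq:
  assumes vs: "valid_system n c r" and s1: "sync_schedule n c r f1 g1" and s2: "sync_schedule n c r f2 g2"
  shows "Qk n c r f1 g1 k \<longleftrightarrow> Qk n c r f2 g2 k"
proof -
  obtain \<tau> \<sigma> :: real where sg: "\<sigma> = 1 \<or> \<sigma> = -1"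
    and act: "\<And>t i j. active n c r f2 g2 t i j \<longleftrightarrow> active n c r f1 g1 (\<tau> + \<sigma> * t) i j"
    using lemmaC[OF vs s1 s2] by blast
  have ind: "indep n c r f2 g2 t S \<longleftrightarrow> indep n c r f1 g1 (\<tau> + \<sigma> * t) S" for t S
    unfolding indep_def using act by simp
  have inv: "\<tau> + \<sigma> * (\<sigma> * (t' - \<tau>)) = t'" for t' using sg by auto
  show ?thesis
  proof
    assume Q1: "Qk n c r f1 g1 k"
    show "Qk n c r f2 g2 k" unfolding Qk_def
    proof
      fix t
      obtain S where "S \<subseteq> {..<n}" "card S = n - k" "indep n c r f1 g1 (\<tau> + \<sigma> * t) S"
        using Q1 unfolding Qk_def by blast
      then show "\<exists>S. S \<subseteq> {..<n} \<and> card S = n - k \<and> indep n c r f2 g2 t S" using ind by blast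
    qed
  next
    assume Q2: "Qk n c r f2 g2 k"
    show "Qk n c r f1 g1 k" unfolding Qk_def
    proof
      fix t'
      obtain S where "S \<subseteq> {..<n}" "card S = n - k" "indep n c r f2 g2 (\<sigma> * (t' - \<tau>)) S"
        using Q2 unfolding Qk_def by blast
      then show "\<exists>S. S \<subseteq> {..<n} \<and> card S = n - k \<and> indep n c r f1 g1 t' S" using ind inv by metis
    qed
  qed
qed

theorem corollary5:
  fixes n :: nat and c :: "nat \<Rightarrow> complex" and r :: real
    and f1 f2 :: "nat \<Rightarrow> real" and g1 g2 :: "nat \<Rightarrow> int"
  assumes "valid_system n c r"
    and "sync_schedule n c r f1 g1"
    and "sync_schedule n c r f2 g2"
  shows "isolation_resilience n c r f1 g1 = isolation_resilience n c r f2 g2"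
proof -
  have "resilient n c r f1 g1 = resilient n c r f2 g2"
  proof
    fix k
    show "resilient n c r f1 g1 k = resilient n c r f2 g2 k"
      using res_char[OF assms(1) assms(2)] res_char[OF assms(1) assms(3)] Q_eq[OF assms] by simp
  qed
  then show ?thesis unfolding isolation_resilience_def by simp
qed

end
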